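(* Let $H,U$ be Hilbert spaces, $1<q<\infty$, and let $m:\mathcal{F}\to L(H,U)$ be a countably additive vector measure with finite $q$-variation $\overline{m}_q^{\mathbb{P}}(\Omega)<\infty$. Let $A\in\mathcal{F}$ with $\mathbb{P}(A)>0$ be such that $m(A_1)u=m(A_2)u$ for all $u\in H$ and all $A_1,A_2\in\mathcal{F}$ with $A_1,A_2\subset A$ and $\mathbb{P}(A_1)=\mathbb{P}(A_2)$. Then $$\mathbb{P}(B\mid A)\,m(A)=m(A\cap B)\quad\text{for all }B\in\mathcal{F},$$ where $\mathbb{P}(B\mid A)=\mathbb{P}(A\cap B)/\mathbb{P}(A)$.
   Context: $(\Omega,\mathcal{F},\mathbb{P})$ is a complete atomless probability space with $\Omega$ Polish and $\mathcal{F}$ its Borel $\sigma$-field. With $\frac1p+\frac1q=1$, the $q$-variation of $m$ is $\overline{m}_q^{\mathbb{P}}(\Omega):=\sup\{\sum_{i=1}^n\|m(A_i)x_i\|_U:\ Y=\sum_{i=1}^n\mathbf{1}_{A_i}x_i,\ A_i\in\mathcal{F}\text{ pairwise disjoint},\ x_i\in H,\ \mathbb{E}\|Y\|_H^p\le1\}$. *)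

theory Defs
  imports "HOL-Probability.Probability"
begin

definition atomless :: "'a measure \<Rightarrow> bool" where
  "atomless M \<longleftrightarrow> (\<forall>A\<in>sets M. 0 < measure M A \<longrightarrow>
     (\<exists>B\<in>sets M. B \<subseteq> A \<and> 0 < measure M B \<and> measure M B < measure M A))"

definition countably_additive_vm ::
  "'a measure \<Rightarrow> ('a set \<Rightarrow> ('h::real_normed_vector \<Rightarrow>\<^sub>L 'u::real_normed_vector)) \<Rightarrow> bool" where
  "countably_additive_vm M m \<longleftrightarrow>
     (\<forall>A :: nat \<Rightarrow> 'a set. range A \<subseteq> sets M \<longrightarrow> disjoint_family A \<longrightarrow>
        (\<lambda>i. m (A i)) sums m (\<Union>i. A i))"

text \<open>The q-variation of m over the whole space, with 1/p + 1/q = 1, i.e. p = q/(q-1).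
  Supremum over simple functions Y = sum_i 1_{A_i} x_i with disjoint A_i and E||Y||^p <= 1.\<close>
definition q_variation ::
  "'a measure \<Rightarrow> ('a set \<Rightarrow> ('h::real_normed_vector \<Rightarrow>\<^sub>L 'u::real_normed_vector)) \<Rightarrow> real \<Rightarrow> ennreal" where
  "q_variation M m q =
     (let p = q / (q - 1) in
      SUP (n, A, x) \<in> {(n :: nat, A :: nat \<Rightarrow> 'a set, x :: nat \<Rightarrow> 'h).
            (\<forall>i<n. A i \<in> sets M) \<and> disjoint_family_on A {..<n} \<and>
            (\<integral>\<^sup>+ \<omega>. ennreal (norm (\<Sum>i<n. indicator (A i) \<omega> *\<^sub>R x i) powr p) \<partial>M) \<le> 1}.
        ennreal (\<Sum>i<n. norm (blinfun_apply (m (A i)) (x i))))"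

end

theory Submission
  imports Defs
begin

lemma k_le_aux: fixes y :: real assumes "0 \<le> y" "y \<le> 1" shows "nat \<lfloor>2^n * y\<rfloor> \<le> (2::nat)^n"
proof -
  have "(2::real)^n * y \<le> 2^n" using assms by (simp add: mult_left_le)
  hence "\<lfloor>(2::real)^n * y\<rfloor> \<le> \<lfloor>(2::real)^n\<rfloor>" by (rule floor_mono)
  hence "\<lfloor>(2::real)^n * y\<rfloor> \<le> 2^n" by simp
  then show ?thesis by (simp add: nat_le_iff)
qed
lemma fl2_aux: fixes y :: real shows "2 * \<lfloor>2^n * y\<rfloor> \<le> \<lfloor>2^Suc n * y\<rfloor>"
proof -
  have "real_of_int (2 * \<lfloor>2^n * y\<rfloor>) \<le> 2 * (2^n * y)" by simp
  then show ?thesis by (simp add: le_floor_iff)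
qed

lemma small_subset:
  assumes "prob_space M" "atomless M" "C \<in> sets M" "0 < measure M C" "0 < e"
  shows "\<exists>E\<in>sets M. E \<subseteq> C \<and> 0 < measure M E \<and> measure M E < e"
proof -
  interpret prob_space M by fact
  have *: "\<exists>E\<in>sets M. E \<subseteq> C \<and> 0 < measure M E \<and> measure M E \<le> measure M C / 2^n" for n
  proof (induction n)
    case 0 thus ?case using assms by auto
  next
    case (Suc n)
    then obtain E where E: "E\<in>sets M" "E \<subseteq> C" "0 < measure M E" "measure M E \<le> measure M C / 2^n"
      by blast
    from assms(2) E obtain B where B: "B \<in> sets M" "B \<subseteq> E" "0 < measure M B" "measure M B < measure M E"
      unfolding atomless_def by blast
    have d: "measure M (E - B) = measure M E - measure M B"
      using finite_measure_Diff B E by auto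
    show ?case
    proof (cases "measure M B \<le> measure M E / 2")
      case True
      have h: "measure M C / 2^Suc n = (measure M C / 2^n) / 2" by simp
      have "measure M E / 2 \<le> (measure M C / 2^n) / 2" using E(4) by (rule divide_right_mono) simp
      hence "measure M B \<le> measure M C / 2^Suc n" unfolding h using True by linarith
      then show ?thesis using B E by blast
    next
      case False
      have h: "measure M C / 2^Suc n = (measure M C / 2^n) / 2" by simp
      have "measure M E / 2 \<le> (measure M C / 2^n) / 2" using E(4) by (rule divide_right_mono) simp
      hence "measure M (E - B) \<le> measure M C / 2^Suc n" unfolding h using False d by linarith
      moreover have "0 < measure M (E - B)" using d B by linarith
      moreover have "E - B \<in> sets M" "E - B \<subseteq> C" using B E by auto
      ultimately show ?thesis by blast
    qed
  qed
  obtain n where n: "(1/2::real) ^ n < e / measure M C"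
    using real_arch_pow_inv[of "e / measure M C" "1/2::real"] assms by auto
  then have "measure M C / 2^n < e" using assms by (simp add: field_simps power_one_over)
  moreover obtain E where "E\<in>sets M" "E \<subseteq> C" "0 < measure M E" "measure M E \<le> measure M C / 2^n"
    using *[of n] by blast
  ultimately show ?thesis by (intro bexI[of _ E]) auto
qed

lemma sierpinski:
  assumes "prob_space M" "atomless M" "C \<in> sets M" "0 \<le> x" "x \<le> measure M C"
  shows "\<exists>D\<in>sets M. D \<subseteq> C \<and> measure M D = x"
proof -
  interpret prob_space M by fact
  define S where "S D = {measure M E | E. E \<in> sets M \<and> E \<subseteq> C - D \<and> measure M E \<le> x - measure M D}" for D
  define \<sigma> where "\<sigma> D = Sup (S D)" for D
  have bdd: "bdd_above (S D)" for D
    by (auto simp: S_def bdd_above_def intro!: exI[of _ 1])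
  have inS: "measure M E \<le> \<sigma> D" if "E \<in> sets M" "E \<subseteq> C - D" "measure M E \<le> x - measure M D" for E D
    unfolding \<sigma>_def by (rule cSup_upper) (use that bdd in \<open>auto simp: S_def\<close>)
  have ex: "\<exists>E. E \<in> sets M \<and> E \<subseteq> C - D \<and> measure M E \<le> x - measure M D \<and> \<sigma> D / 2 \<le> measure M E"
    if "measure M D \<le> x" for D
  proof -
    have ne: "0 \<in> S D" using that by (auto simp: S_def intro!: exI[of _ "{}"])
    hence \<sigma>0: "0 \<le> \<sigma> D" using inS[of "{}" D] that by auto
    show ?thesis
    proof (cases "\<sigma> D = 0")
      case True then show ?thesis using that by (intro exI[of _ "{}"]) auto
    next
      case False
      hence "\<sigma> D / 2 < Sup (S D)" using \<sigma>0 by (simp add: \<sigma>_def)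
      then obtain r where "r \<in> S D" "\<sigma> D / 2 < r" using less_cSup_iff[OF _ bdd] ne by blast
      then show ?thesis by (auto simp: S_def)
    qed
  qed
  define nxt where "nxt D = D \<union> (SOME E. E \<in> sets M \<and> E \<subseteq> C - D \<and> measure M E \<le> x - measure M D \<and> \<sigma> D / 2 \<le> measure M E)" for D
  have nxt: "nxt D \<in> sets M \<and> nxt D \<subseteq> C \<and> measure M (nxt D) \<le> x \<and> D \<subseteq> nxt D \<and> measure M (nxt D) \<ge> measure M D + \<sigma> D / 2"
    if "D \<in> sets M" "D \<subseteq> C" "measure M D \<le> x" for D
  proof -
    let ?E = "SOME E. E \<in> sets M \<and> E \<subseteq> C - D \<and> measure M E \<le> x - measure M D \<and> \<sigma> D / 2 \<le> measure M E"
    have E: "?E \<in> sets M \<and> ?E \<subseteq> C - D \<and> measure M ?E \<le> x - measure M D \<and> \<sigma> D / 2 \<le> measure M ?E"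
      using someI_ex[OF ex[OF that(3)]] .
    have "measure M (nxt D) = measure M D + measure M ?E" unfolding nxt_def
      using E that by (intro finite_measure_Union) auto
    then show ?thesis using E that by (auto simp: nxt_def)
  qed
  define D where "D n = (nxt ^^ n) {}" for n
  have Dsuc: "D (Suc n) = nxt (D n)" for n by (simp add: D_def)
  have Dn: "D n \<in> sets M \<and> D n \<subseteq> C \<and> measure M (D n) \<le> x" for n
  proof (induction n)
    case 0 then show ?case using assms by (simp add: D_def)
  next
    case (Suc n) then show ?case using nxt[of "D n"] Dsuc by auto
  qed
  have grow: "measure M (D (Suc n)) \<ge> measure M (D n) + \<sigma> (D n) / 2" for n
    using nxt[of "D n"] Dn[of n] Dsuc by auto
  have inc: "incseq D" using nxt Dn Dsuc by (intro incseq_SucI) auto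
  let ?U = "\<Union>n. D n"
  have UD: "?U \<in> sets M" "?U \<subseteq> C" using Dn by auto
  have lim: "(\<lambda>n. measure M (D n)) \<longlonglongrightarrow> measure M ?U"
    by (rule finite_Lim_measure_incseq) (use Dn inc in auto)
  have le: "measure M ?U \<le> x" using LIMSEQ_le_const2[OF lim] Dn by auto
  have ge: "x \<le> measure M ?U"
  proof (rule ccontr)
    assume nge: "\<not> x \<le> measure M ?U"
    have "measure M (C - ?U) = measure M C - measure M ?U"
      using UD assms by (intro finite_measure_Diff) auto
    hence pos: "0 < measure M (C - ?U)" using assms nge by linarith
    obtain E where E: "E \<in> sets M" "E \<subseteq> C - ?U" "0 < measure M E" "measure M E < x - measure M ?U"
      using small_subset[OF assms(1,2) _ pos, of "x - measure M ?U"] UD assms nge by auto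
    have mono: "measure M (D n) \<le> measure M ?U" for n
      using UD by (intro finite_measure_mono) auto
    have "measure M E \<le> \<sigma> (D n)" for n
      by (rule inS) (use E mono[of n] in auto)
    hence big: "measure M (D n) \<ge> real n * (measure M E / 2)" for n
    proof (induction n)
      case 0 then show ?case by simp
    next
      case (Suc n)
      have a1: "measure M E \<le> \<sigma> (D n)" using Suc.prems by blast
      have a2: "real (Suc n) * (measure M E / 2) = real n * (measure M E / 2) + measure M E / 2"
        by (simp add: algebra_simps)
      show ?case unfolding a2 using Suc.IH[OF Suc.prems] grow[of n] a1 by linarith
    qed
    obtain n where "1 < real n * (measure M E / 2)" using reals_Archimedean3[of "measure M E / 2"] E by (metis half_gt_zero)
    then show False using big[of n] prob_le_1[of "D n"] by linarith
  qed
  show ?thesis using UD le ge by (intro bexI[of _ ?U]) auto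
qed

theorem lemma3p1:
  fixes M :: "'a::polish_space measure"
    and m :: "'a set \<Rightarrow> ('h::{real_inner, complete_space} \<Rightarrow>\<^sub>L 'u::{real_inner, complete_space})"
    and q :: real
    and A :: "'a set"
  assumes "prob_space M"
    and "sets M = sets borel"
    and "atomless M"
    and "1 < q"
    and "countably_additive_vm M m"
    and "q_variation M m q < \<infinity>"
    and "A \<in> sets M"
    and "0 < measure M A"
    and "\<And>A1 A2 u. A1 \<in> sets M \<Longrightarrow> A2 \<in> sets M \<Longrightarrow> A1 \<subseteq> A \<Longrightarrow> A2 \<subseteq> A \<Longrightarrow>
           measure M A1 = measure M A2 \<Longrightarrow> blinfun_apply (m A1) u = blinfun_apply (m A2) u"
  shows "\<forall>B\<in>sets M. (measure M (A \<inter> B) / measure M A) *\<^sub>R m A = m (A \<inter> B)"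
proof -
  interpret prob_space M by fact
  define a where "a = measure M A"
  have apos: "0 < a" using assms by (simp add: a_def)
  have m0: "m {} = 0"
  proof -
    have "(\<lambda>i. m ((\<lambda>i::nat. {}) i)) sums m (\<Union>i. (\<lambda>i::nat. {}) i)"
      using assms(5)[unfolded countably_additive_vm_def, rule_format, of "\<lambda>i. {}"]
      by (simp add: disjoint_family_on_def)
    hence "(\<lambda>i::nat. m {}) sums m {}" by simp
    hence "(\<lambda>i::nat. m {}) \<longlonglongrightarrow> 0" using summable_LIMSEQ_zero sums_summable by blast
    thus "m {} = 0" using LIMSEQ_unique tendsto_const by blast
  qed
  have add: "m (X \<union> Y) = m X + m Y" if "X \<in> sets M" "Y \<in> sets M" "X \<inter> Y = {}" for X Y
  proof -
    define F where "F i = (if i = 0 then X else if i = 1 then Y else {})" for i :: nat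
    have "range F \<subseteq> sets M" using that by (auto simp: F_def)
    moreover have "disjoint_family F" using that by (auto simp: F_def disjoint_family_on_def)
    ultimately have s: "(\<lambda>i. m (F i)) sums m (\<Union>i. F i)"
      using assms(5) unfolding countably_additive_vm_def by blast
    have "(\<lambda>i. m (F i)) sums (\<Sum>i\<in>{..<2}. m (F i))" by (rule sums_finite) (auto simp: F_def m0)
    moreover have "(\<Union>i. F i) = X \<union> Y" by (auto simp: F_def split: if_splits)
    ultimately show ?thesis using sums_unique2 s by (simp add: F_def eval_nat_numeral)
  qed
  have eq: "m X = m Y" if "X \<in> sets M" "Y \<in> sets M" "X \<subseteq> A" "Y \<subseteq> A" "measure M X = measure M Y" for X Y
    using assms(9)[OF that] by (intro blinfun_eqI) auto
  have sier: "\<exists>D\<in>sets M. D \<subseteq> C \<and> measure M D = x" if "C \<in> sets M" "0 \<le> x" "x \<le> measure M C" for C x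
    using sierpinski[OF assms(1,3) that] .
  have pow: "m A = (2^n) *\<^sub>R m D" if "D \<in> sets M" "D \<subseteq> A" "measure M D = a / 2^n" for n D
    using that
  proof (induction n arbitrary: D)
    case 0 then show ?case using eq[of A D] assms by (simp add: a_def)
  next
    case (Suc n)
    obtain D' where D': "D' \<in> sets M" "D' \<subseteq> A" "measure M D' = a / 2^n"
      using sier[OF assms(7), of "a / 2^n"] apos by (auto simp: a_def field_simps)
    have IH: "m A = (2^n) *\<^sub>R m D'" using Suc.IH D' by blast
    obtain D1 where D1: "D1 \<in> sets M" "D1 \<subseteq> D'" "measure M D1 = a / 2^Suc n"
      using sier[OF D'(1), of "a / 2^Suc n"] apos D' by (auto simp: field_simps)
    have "measure M (D' - D1) = measure M D' - measure M D1"
      using D1 D' by (intro finite_measure_Diff) auto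
    hence m2: "measure M (D' - D1) = a / 2^Suc n" using D1 D' by (simp add: field_simps)
    have "m D' = m D1 + m (D' - D1)" using add[of D1 "D' - D1"] D1 D' by (simp add: Un_absorb1 Un_Diff_cancel)
    also have "m D1 = m D" using eq[of D1 D] D1 D' Suc.prems by auto
    also have "m (D' - D1) = m D" using eq[of "D' - D1" D] D1 D' Suc.prems m2 by auto
    finally have "m D' = 2 *\<^sub>R m D" by (simp add: scaleR_2)
    then show ?case using IH by simp
  qed
  have mult: "m D = real k *\<^sub>R m D0" if "k \<le> 2^n" "D \<in> sets M" "D \<subseteq> A" "measure M D = real k * a / 2^n"
      "D0 \<in> sets M" "D0 \<subseteq> A" "measure M D0 = a / 2^n" for k n D D0
    using that
  proof (induction k arbitrary: D)
    case 0
    then show ?case using eq[of D "{}"] m0 by auto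
  next
    case (Suc k)
    obtain D1 where D1: "D1 \<in> sets M" "D1 \<subseteq> D" "measure M D1 = a / 2^n"
      using sier[OF Suc.prems(2), of "a / 2^n"] apos Suc.prems by (auto simp: field_simps)
    have "measure M (D - D1) = measure M D - measure M D1"
      using D1 Suc.prems by (intro finite_measure_Diff) auto
    hence m2: "measure M (D - D1) = real k * a / 2^n" using D1 Suc.prems by (simp add: field_simps)
    have IH: "m (D - D1) = real k *\<^sub>R m D0" using Suc.IH[of "D - D1"] Suc.prems D1 m2 by auto
    have "m D = m D1 + m (D - D1)" using add[of D1 "D - D1"] D1 Suc.prems by (simp add: Un_absorb1 Un_Diff_cancel)
    also have "m D1 = m D0" using eq[of D1 D0] D1 Suc.prems by auto
    finally show ?case using IH by (simp add: algebra_simps)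
  qed
  have dy: "m D = (measure M D / a) *\<^sub>R m A" if "k \<le> 2^n" "D \<in> sets M" "D \<subseteq> A" "measure M D = real k * a / 2^n" for k n D
  proof -
    obtain D0 where D0: "D0 \<in> sets M" "D0 \<subseteq> A" "measure M D0 = a / 2^n"
      using sier[OF assms(7), of "a / 2^n"] apos by (auto simp: a_def field_simps)
    have "m D = real k *\<^sub>R m D0" using mult[OF that D0] .
    moreover have "m A = (2^n) *\<^sub>R m D0" using pow[OF D0] .
    ultimately show ?thesis using that apos by (simp add: field_simps)
  qed
  have lim_m: "(\<lambda>n. m (D n)) \<longlonglongrightarrow> m (\<Union>n. D n)" if "incseq D" "range D \<subseteq> sets M" for D :: "nat \<Rightarrow> 'a set"
  proof -
    have "range (disjointed D) \<subseteq> sets M" by (rule sets.range_disjointed_sets[OF that(2)])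
    hence "(\<lambda>i. m (disjointed D i)) sums m (\<Union>i. disjointed D i)"
      using assms(5) disjoint_family_disjointed unfolding countably_additive_vm_def by blast
    hence "(\<lambda>n. \<Sum>i<n. m (disjointed D i)) \<longlonglongrightarrow> m (\<Union>n. D n)" by (simp add: sums_def UN_disjointed_eq)
    hence L: "(\<lambda>n. \<Sum>i<Suc n. m (disjointed D i)) \<longlonglongrightarrow> m (\<Union>n. D n)" by (rule LIMSEQ_Suc)
    have ps: "(\<Sum>i<Suc n. m (disjointed D i)) = m (D n)" for n
    proof (induction n)
      case 0 then show ?case by simp
    next
      case (Suc n)
      have ss: "D n \<subseteq> D (Suc n)" using that(1) by (simp add: incseq_Suc_iff)
      have "m (D (Suc n)) = m (D n \<union> (D (Suc n) - D n))" using ss by (simp add: Un_absorb1 Un_Diff_cancel)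
      also have "\<dots> = m (D n) + m (D (Suc n) - D n)" using that(2) by (intro add) auto
      finally show ?case using Suc disjointed_mono[of D n] that(1) by (simp add: incseq_def mono_def)
    qed
    show ?thesis using L unfolding ps .
  qed
  show ?thesis
  proof
    fix B assume B: "B \<in> sets M"
    define B' where "B' = A \<inter> B"
    define t where "t = measure M B'"
    define y where "y = t / a"
    have B'm: "B' \<in> sets M" "B' \<subseteq> A" using B assms by (auto simp: B'_def)
    have t0: "0 \<le> t" "t \<le> a" using B'm assms(7) by (auto simp: t_def a_def intro!: finite_measure_mono)
    have y0: "0 \<le> y" "y \<le> 1" using t0 apos by (auto simp: y_def)
    define k where "k n = nat \<lfloor>2^n * y\<rfloor>" for n
    define s where "s n = real (k n) * a / 2^n" for n
    have kr: "real (k n) = real_of_int \<lfloor>2^n * y\<rfloor>" for n using y0 by (simp add: k_def)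
    have k_le: "k n \<le> 2^n" for n unfolding k_def using k_le_aux[OF y0] .
    have s_le: "s n \<le> t" for n
    proof -
      have "real (k n) \<le> 2^n * y" using kr[of n] by simp
      hence "real (k n) * a / 2^n \<le> 2^n * y * a / 2^n" using apos by (intro divide_right_mono mult_right_mono) auto
      then show ?thesis using apos by (simp add: s_def y_def)
    qed
    have s_ge: "t - a / 2^n \<le> s n" for n
    proof -
      have "2^n * y - 1 \<le> real (k n)" using kr[of n] by linarith
      hence "(2^n * y - 1) * a / 2^n \<le> real (k n) * a / 2^n" using apos by (intro divide_right_mono mult_right_mono) auto
      moreover have "(2^n * y - 1) * a / 2^n = t - a / 2^n" using apos by (simp add: y_def field_simps)
      ultimately show ?thesis by (simp add: s_def)
    qed
    have s0: "0 \<le> s n" for n using apos by (simp add: s_def)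
    have s_mono: "s n \<le> s (Suc n)" for n
    proof -
      have "2 * \<lfloor>2^n * y\<rfloor> \<le> \<lfloor>2^Suc n * y\<rfloor>"
        by (rule fl2_aux)
      hence "2 * real (k n) \<le> real (k (Suc n))" using kr[of n] kr[of "Suc n"]
        by (metis of_int_le_iff of_int_mult of_int_numeral)
      hence "2 * real (k n) * a / 2^Suc n \<le> real (k (Suc n)) * a / 2^Suc n" using apos
        by (intro divide_right_mono mult_right_mono) auto
      then show ?thesis by (simp add: s_def)
    qed
    have s_lim: "s \<longlonglongrightarrow> t"
    proof (rule tendsto_sandwich[of "\<lambda>n. t - a / 2^n" _ _ "\<lambda>n. t"])
      show "\<forall>\<^sub>F n in sequentially. t - a / 2 ^ n \<le> s n" using s_ge by auto
      show "\<forall>\<^sub>F n in sequentially. s n \<le> t" using s_le by auto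
      show "(\<lambda>n. t - a / 2 ^ n) \<longlonglongrightarrow> t"
        using tendsto_diff[OF tendsto_const LIMSEQ_divide_realpow_zero[of 2 a]] by simp
    qed simp
    define D where "D = rec_nat (SOME E. E \<in> sets M \<and> E \<subseteq> B' \<and> measure M E = s 0)
      (\<lambda>n Dn. Dn \<union> (SOME E. E \<in> sets M \<and> E \<subseteq> B' - Dn \<and> measure M E = s (Suc n) - s n))"
    have D0: "D 0 = (SOME E. E \<in> sets M \<and> E \<subseteq> B' \<and> measure M E = s 0)" by (simp add: D_def)
    have DS: "D (Suc n) = D n \<union> (SOME E. E \<in> sets M \<and> E \<subseteq> B' - D n \<and> measure M E = s (Suc n) - s n)" for n
      by (simp add: D_def)
    have Dn: "D n \<in> sets M \<and> D n \<subseteq> B' \<and> measure M (D n) = s n" for n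
    proof (induction n)
      case 0
      have "\<exists>E. E \<in> sets M \<and> E \<subseteq> B' \<and> measure M E = s 0"
        using sier[OF B'm(1), of "s 0"] s0 s_le t_def by auto
      from someI_ex[OF this] show ?case by (simp add: D0)
    next
      case (Suc n)
      have "measure M (B' - D n) = measure M B' - measure M (D n)"
        using Suc B'm by (intro finite_measure_Diff) auto
      hence "measure M (B' - D n) = t - s n" using Suc by (simp add: t_def)
      hence "\<exists>E. E \<in> sets M \<and> E \<subseteq> B' - D n \<and> measure M E = s (Suc n) - s n"
        using sier[of "B' - D n" "s (Suc n) - s n"] Suc B'm s_mono[of n] s_le[of "Suc n"] by auto
      from someI_ex[OF this] have E: "(SOME E. E \<in> sets M \<and> E \<subseteq> B' - D n \<and> measure M E = s (Suc n) - s n) \<in> sets M"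
        "(SOME E. E \<in> sets M \<and> E \<subseteq> B' - D n \<and> measure M E = s (Suc n) - s n) \<subseteq> B' - D n"
        "measure M (SOME E. E \<in> sets M \<and> E \<subseteq> B' - D n \<and> measure M E = s (Suc n) - s n) = s (Suc n) - s n"
        by auto
      have "measure M (D (Suc n)) = measure M (D n) + (s (Suc n) - s n)"
        unfolding DS using E Suc by (subst finite_measure_Union) auto
      then show ?case using E Suc unfolding DS by auto
    qed
    have inc: "incseq D" by (intro incseq_SucI) (auto simp: DS)
    have rng: "range D \<subseteq> sets M" using Dn by auto
    have mD: "m (D n) = (s n / a) *\<^sub>R m A" for n
      using dy[OF k_le[of n], of "D n"] Dn[of n] B'm by (auto simp: s_def)
    have L1: "(\<lambda>n. m (D n)) \<longlonglongrightarrow> (t / a) *\<^sub>R m A"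
      unfolding mD by (intro tendsto_scaleR tendsto_divide s_lim tendsto_const) (use apos in auto)
    have L2: "(\<lambda>n. m (D n)) \<longlonglongrightarrow> m (\<Union>n. D n)" using lim_m[OF inc rng] .
    have "(\<lambda>n. measure M (D n)) \<longlonglongrightarrow> measure M (\<Union>n. D n)"
      using finite_Lim_measure_incseq[OF rng inc] .
    hence "measure M (\<Union>n. D n) = t" using s_lim Dn LIMSEQ_unique by auto
    hence "m (\<Union>n. D n) = m B'" using Dn B'm rng by (intro eq) (auto simp: t_def)
    hence "m B' = (t / a) *\<^sub>R m A" using L1 L2 LIMSEQ_unique by metis
    then show "(measure M (A \<inter> B) / measure M A) *\<^sub>R m A = m (A \<inter> B)"
      by (simp add: B'_def t_def a_def)
  qed
qed

end
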